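(* There exist absolute constants $0<c\le C<\infty$ such that for all $d\in\mathbb N_+$ and all $1\le n\le 3^d$, $$c\,\psi(n)\le a_n(I_d: W_2^{\infty}(\mathbb T^d)\to L_2(\mathbb T^d))\le C\,\psi(n),\qquad \psi(n)=\begin{cases}1,&1\le n\le d,\\ \Big(\frac{\log(1+\frac{d}{\log n})}{\log n}\Big)^{1/2},& d\le n\le 3^d,\end{cases}$$ and $a_n(I_d: W_2^{\infty}(\mathbb T^d)\to L_2(\mathbb T^d))=0$ for $n>3^d$.
   Context: $\log$ is base 2. $\mathbb T^d$ carries the normalized Lebesgue measure and $\hat f({\bf k})$ are Fourier coefficients w.r.t. $e^{i{\bf k}\cdot{\bf x}}$. $W_2^\infty(\mathbb T^d)$ is the space of all $f\in\bigcap_{{\bf m}\in\mathbb N_+^d}W_2^{\bf m}(\mathbb T^d)$ with $\sup_{{\bf m}\in\mathbb N_+^d}\|f|W_2^{\bf m}(\mathbb T^d)\|<\infty$, normed by this supremum, where $\|f|W_2^{\bf m}(\mathbb T^d)\|=\big(\sum_{{\bf k}\in\mathbb Z^d}(1+\sum_j|k_j|^{2m_j})|\hat f({\bf k})|^2\big)^{1/2}$. Equivalently, $W_2^\infty(\mathbb T^d)$ consists of trigonometric polynomials $f=\sum_{{\bf k}\in\{-1,0,1\}^d}\hat f({\bf k})e^{i{\bf k}\cdot{\bf x}}$ with norm $\big(\sum_{{\bf k}\in\{-1,0,1\}^d}(1+\sum_{j=1}^d|k_j|)|\hat f({\bf k})|^2\big)^{1/2}$; it has dimension $3^d$. $I_d$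 is the identity embedding; $a_n(T)=\inf\{\|T-A\|:\operatorname{rank}A<n\}$. *)

theory Defs
  imports "HOL-Analysis.Analysis"
begin

text \<open>Functions on the torus are represented by their Fourier coefficients
  (Parseval: L_2(T^d) is isometric to l_2(Z^d)). Frequencies in Z^d are
  integer lists of length d.\<close>

definition freqs :: "nat \<Rightarrow> int list set" where
  "freqs d = {k. length k = d \<and> set k \<subseteq> {-1, 0, 1}}"

text \<open>W_2^infinity(T^d): trigonometric polynomials with frequencies in {-1,0,1}^d.\<close>
definition Wspace :: "nat \<Rightarrow> (int list \<Rightarrow> complex) set" where
  "Wspace d = {f. \<forall>k. k \<notin> freqs d \<longrightarrow> f k = 0}"

definition normW :: "nat \<Rightarrow> (int list \<Rightarrow> complex) \<Rightarrow> real" where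
  "normW d f = sqrt (\<Sum>k\<in>freqs d. (1 + real_of_int (sum_list (map abs k))) * (cmod (f k))\<^sup>2)"

definition L2space :: "nat \<Rightarrow> (int list \<Rightarrow> complex) set" where
  "L2space d = {g. (\<forall>k. length k \<noteq> d \<longrightarrow> g k = 0) \<and>
                   (\<lambda>k. (cmod (g k))\<^sup>2) summable_on UNIV}"

definition normL2 :: "(int list \<Rightarrow> complex) \<Rightarrow> real" where
  "normL2 g = sqrt (infsum (\<lambda>k. (cmod (g k))\<^sup>2) UNIV)"

definition low_rank_ops :: "nat \<Rightarrow> nat \<Rightarrow> ((int list \<Rightarrow> complex) \<Rightarrow> (int list \<Rightarrow> complex)) set" where
  "low_rank_ops d n = {A.
     (\<forall>f\<in>Wspace d. \<forall>g\<in>Wspace d. A (\<lambda>k. f k + g k) = (\<lambda>k. A f k + A g k)) \<and>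
     (\<forall>f\<in>Wspace d. \<forall>c. A (\<lambda>k. c * f k) = (\<lambda>k. c * A f k)) \<and>
     (\<forall>f\<in>Wspace d. A f \<in> L2space d) \<and>
     (\<exists>B. finite B \<and> card B < n \<and> B \<subseteq> L2space d \<and>
          (\<forall>f\<in>Wspace d. \<exists>c. A f = (\<lambda>k. \<Sum>b\<in>B. c b * b k)))}"

definition opnorm_diff :: "nat \<Rightarrow> ((int list \<Rightarrow> complex) \<Rightarrow> (int list \<Rightarrow> complex)) \<Rightarrow> real" where
  "opnorm_diff d A = (SUP f\<in>Wspace d - {\<lambda>k. 0}. normL2 (\<lambda>k. f k - A f k) / normW d f)"

definition approx_num :: "nat \<Rightarrow> nat \<Rightarrow> real" where
  "approx_num d n = (INF A\<in>low_rank_ops d n. opnorm_diff d A)"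

end

theory Submission
  imports Defs "HOL-Library.Function_Algebras"
begin

definition lvl :: "int list \<Rightarrow> nat" where
  "lvl k = nat (sum_list (map abs k))"

lemma sum_list_abs_nonneg: "0 \<le> sum_list (map abs (k::int list))"
  by (induction k) auto

lemma lvl_Nil[simp]: "lvl [] = 0" by (simp add: lvl_def)

lemma lvl_Cons[simp]: "lvl (a # k) = nat \<bar>a\<bar> + lvl k"
  using sum_list_abs_nonneg[of k] by (simp add: lvl_def nat_add_distrib)

lemma freqs_0: "freqs 0 = {[]}"
  by (auto simp: freqs_def)

lemma freqs_Suc: "freqs (Suc d) = Cons 0 ` freqs d \<union> Cons 1 ` freqs d \<union> Cons (-1) ` freqs d"
proof -
  have "k \<in> freqs (Suc d) \<longleftrightarrow> k \<in> Cons 0 ` freqs d \<union> Cons 1 ` freqs d \<union> Cons (-1) ` freqs d" for k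
    by (cases k) (auto simp: freqs_def)
  then show ?thesis by blast
qed

lemma finite_freqs[simp]: "finite (freqs d)"
  by (induction d) (auto simp: freqs_0 freqs_Suc)

lemma lvl_le_length: "k \<in> freqs d \<Longrightarrow> lvl k \<le> d"
proof (induction k arbitrary: d)
  case Nil then show ?case by simp
next
  case (Cons a k)
  then obtain d' where d: "d = Suc d'" "k \<in> freqs d'" "a \<in> {-1,0,1}"
    by (cases d) (auto simp: freqs_def)
  then have "nat \<bar>a\<bar> \<le> 1" by auto
  with Cons.IH[OF d(2)] d(1) show ?case by simp
qed

definition Elev :: "nat \<Rightarrow> nat \<Rightarrow> int list set" where
  "Elev d i = {k \<in> freqs d. lvl k = i}"

lemma finite_Elev[simp]: "finite (Elev d i)" by (simp add: Elev_def)

lemma card_Elev: "card (Elev d i) = (d choose i) * 2 ^ i"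
proof (induction d arbitrary: i)
  case 0
  have "Elev 0 i = (if i = 0 then {[]} else {})" by (auto simp: Elev_def freqs_0)
  then show ?case by simp
next
  case (Suc d)
  have inj: "inj (Cons a)" for a :: int by (simp add: inj_def)
  show ?case
  proof (cases i)
    case 0
    have "Elev (Suc d) 0 = Cons 0 ` Elev d 0"
      by (auto simp: Elev_def freqs_Suc)
    then show ?thesis using Suc.IH[of 0] 0 card_image[OF inj_on_subset[OF inj subset_UNIV]] by simp
  next
    case (Suc i')
    have eq: "Elev (Suc d) i = Cons 0 ` Elev d i \<union> Cons 1 ` Elev d i' \<union> Cons (-1) ` Elev d i'"
      by (auto simp: Elev_def freqs_Suc Suc)
    have c: "card (Cons a ` X) = card X" for a :: int and X
      using card_image[OF inj_on_subset[OF inj subset_UNIV]] by blast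
    have "card (Elev (Suc d) i) = card (Elev d i) + card (Elev d i') + card (Elev d i')"
      unfolding eq
      by (subst card_Un_disjoint, simp, simp, force)+ (simp add: c)
    also have "\<dots> = (d choose i) * 2^i + 2 * ((d choose i') * 2^i')"
      using Suc.IH by simp
    also have "\<dots> = (Suc d choose i) * 2^i"
      by (simp add: Suc algebra_simps)
    finally show ?thesis .
  qed
qed

definition Lev :: "nat \<Rightarrow> nat \<Rightarrow> int list set" where
  "Lev d j = {k \<in> freqs d. lvl k \<le> j}"

lemma finite_Lev[simp]: "finite (Lev d j)" by (simp add: Lev_def)

lemma card_Lev: "card (Lev d j) = (\<Sum>i\<le>j. (d choose i) * 2 ^ i)"
proof -
  have "Lev d j = (\<Union>i\<in>{..j}. Elev d i)" by (auto simp: Lev_def Elev_def)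
  then have "card (Lev d j) = (\<Sum>i\<le>j. card (Elev d i))"
    by (simp only:) (rule card_UN_disjoint, auto simp: Elev_def)
  then show ?thesis by (simp add: card_Elev)
qed

lemma Lev_d: "Lev d d = freqs d"
  using lvl_le_length by (auto simp: Lev_def)

lemma card_freqs: "card (freqs d) = 3 ^ d"
proof -
  have "(3::nat) ^ d = (2 + 1) ^ d" by simp
  also have "\<dots> = (\<Sum>i\<le>d. (d choose i) * 2 ^ i)"
    by (subst binomial) simp
  finally show ?thesis using card_Lev[of d d] Lev_d by simp
qed

lemma card_Lev0: "card (Lev d 0) = 1"
  by (simp add: card_Lev)

lemma card_Lev1: "card (Lev d 1) = 1 + 2 * d"
  by (simp add: card_Lev)

lemma card_Lev_lower:
  assumes "1 \<le> m" "m \<le> d"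
  shows "(2 * real d / real m) ^ m \<le> real (card (Lev d m))"
proof -
  have "(2 * real d / real m) ^ m = (real d / real m) ^ m * 2 ^ m"
    by (simp add: power_mult_distrib[symmetric] mult.commute)
  also have "\<dots> \<le> real (d choose m) * 2 ^ m"
    using binomial_ge_n_over_k_pow_k[of m d, where 'a=real] assms by simp
  also have "\<dots> = real (card (Elev d m))" by (simp add: card_Elev)
  also have "\<dots> \<le> real (card (Lev d m))"
    by (simp add: card_mono Elev_def Lev_def subset_iff)
  finally show ?thesis .
qed

lemma card_Lev_upper:
  assumes "1 \<le> j" "j \<le> d"
  shows "real (card (Lev d j)) \<le> (6 * real d / real j) ^ j"
proof -
  define t where "t = real j / (2 * real d)"
  have t0: "0 < t" and t1: "t \<le> 1" using assms by (auto simp: t_def field_simps)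
  have "real (card (Lev d j)) = (\<Sum>i\<le>j. real (d choose i) * 2 ^ i)"
    by (simp add: card_Lev)
  also have "\<dots> \<le> (\<Sum>i\<le>j. real (d choose i) * (2 * t) ^ i / t ^ j)"
  proof (rule sum_mono)
    fix i assume "i \<in> {..j}"
    then have "t ^ j \<le> t ^ i" using t0 t1 by (simp add: power_decreasing)
    then have "2 ^ i * t ^ j \<le> 2 ^ i * t ^ i" by simp
    then have "2 ^ i \<le> (2 * t) ^ i / t ^ j"
      using t0 by (simp add: field_simps power_mult_distrib)
    then show "real (d choose i) * 2 ^ i \<le> real (d choose i) * (2 * t) ^ i / t ^ j"
      using mult_left_mono by fastforce
  qed
  also have "\<dots> \<le> (\<Sum>i\<le>d. real (d choose i) * (2 * t) ^ i / t ^ j)"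
    by (rule sum_mono2) (use assms t0 in auto)
  also have "\<dots> = (\<Sum>i\<le>d. real (d choose i) * (2 * t) ^ i * 1 ^ (d - i)) / t ^ j"
    by (simp add: sum_divide_distrib)
  also have "\<dots> = (2 * t + 1) ^ d / t ^ j"
    by (subst binomial_ring) simp
  also have "(2 * t + 1) ^ d \<le> exp (2 * t) ^ d"
    by (rule power_mono) (use t0 in \<open>auto simp: add.commute[of _ 1] exp_ge_add_one_self\<close>)
  also have "exp (2 * t) ^ d = exp (real j)"
    using assms by (simp add: exp_of_nat_mult[symmetric] t_def)
  also have "exp (real j) = exp 1 ^ j" by (simp add: exp_of_nat_mult[symmetric])
  also have "exp 1 ^ j \<le> (3::real) ^ j" by (rule power_mono) (auto simp: exp_le)
  finally have "real (card (Lev d j)) \<le> 3 ^ j / t ^ j"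
    using t0 by (simp add: divide_right_mono)
  also have "\<dots> = (6 * real d / real j) ^ j"
  proof -
    have "3 / t = 6 * real d / real j" using assms by (simp add: t_def field_simps)
    then show ?thesis by (simp add: power_divide[symmetric])
  qed
  finally show ?thesis .
qed

lemma log2_le_3sqrt:
  fixes z :: real assumes "0 < z" shows "log 2 z \<le> 3 * sqrt z"
proof -
  have s: "0 < sqrt z" using assms by simp
  have "ln z = 2 * ln (sqrt z)" using assms by (simp add: ln_sqrt)
  also have "\<dots> \<le> 2 * (sqrt z - 1)" using ln_le_minus_one[OF s] by simp
  finally have lz: "ln z \<le> 2 * sqrt z" by simp
  have l2: "2/3 \<le> ln (2::real)" by (rule ln2_ge_two_thirds)
  show ?thesis
  proof (cases "ln z \<le> 0")
    case True
    then have "log 2 z \<le> 0" by (simp add: log_def divide_nonpos_pos)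
    then show ?thesis using s by linarith
  next
    case False
    have "log 2 z = ln z / ln 2" by (simp add: log_def)
    also have "\<dots> \<le> 2 * sqrt z / (2/3)"
      using False lz l2 assms by (intro frac_le) auto
    finally show ?thesis by simp
  qed
qed

lemma log2_three_halves: "1/2 \<le> log 2 (3/2::real)"
proof -
  have "sqrt 2 \<le> (3/2::real)"
    by (rule real_le_lsqrt) (auto simp: power2_eq_square)
  then have "2 powr (1/2) \<le> (3/2::real)" by (simp add: powr_half_sqrt)
  then show ?thesis by (subst le_log_iff) auto
qed

lemma dL_ge1: fixes L :: real assumes "1 \<le> L" shows "1 \<le> 1 + real d / L"
proof -
  have "0 \<le> real d / L" using assms by (intro divide_nonneg_nonneg) auto
  then show ?thesis by linarith
qed

lemma dL_pos: fixes L :: real assumes "1 \<le> L" shows "0 < 1 + real d / L"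
  using dL_ge1[OF assms, of d] by linarith

lemma log_1p_nonneg: fixes L :: real assumes "1 \<le> L" shows "0 \<le> log 2 (1 + real d / L)"
  using dL_ge1[OF assms, of d] by simp

lemma upper_a:
  fixes j d n :: nat
  assumes j1: "1 \<le> j" and jd: "j \<le> d" and n2: "2 \<le> n"
    and nb: "real n \<le> (6 * real d / real j) ^ j" and n3: "n \<le> 3 ^ d"
  shows "log 2 (real n) \<le> 36 * real j * log 2 (1 + real d / log 2 (real n))"
proof -
  define L where "L = log 2 (real n)"
  have L1: "1 \<le> L" using n2 by (simp add: L_def)
  have r3: "real n \<le> 3 ^ d" using n3
    by (metis of_nat_le_iff of_nat_numeral of_nat_power)
  have "L \<le> log 2 (3 ^ d)" unfolding L_def using n2 r3
    by (subst log_le_cancel_iff) auto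
  also have "\<dots> = real d * log 2 3" by (simp add: log_nat_power)
  also have "\<dots> \<le> real d * 2"
  proof -
    have "log 2 (3::real) \<le> log 2 4" by simp
    also have "log 2 (4::real) = 2"
      using log_nat_power[of 2 2 2] by simp
    finally show ?thesis by (intro mult_left_mono) auto
  qed
  finally have L2d: "L \<le> 2 * real d" by simp
  define y where "y = real d / real j"
  have y1: "1 \<le> y" using j1 jd by (simp add: y_def)
  have hL: "L \<le> real j * log 2 (6 * y)"
  proof -
    have "L \<le> log 2 ((6 * y) ^ j)" unfolding L_def
      using n2 nb y1 by (intro log_mono) (auto simp: y_def)
    also have "\<dots> = real j * log 2 (6 * y)" using y1 by (intro log_nat_power) simp
    finally show ?thesis .
  qed
  have Xnn: "0 \<le> log 2 (1 + real d / L)" using log_1p_nonneg[OF L1] .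
  show ?thesis
  proof (cases "L \<le> real j")
    case True
    have "1/2 \<le> real d / L" using L2d L1 by (simp add: field_simps)
    then have "3/2 \<le> 1 + real d / L" by simp
    then have "log 2 (3/2) \<le> log 2 (1 + real d / L)"
      using log_mono[of 2 "3/2" "1 + real d / L"] by simp
    with log2_three_halves have "1/2 \<le> log 2 (1 + real d / L)" by simp
    then have "real j \<le> 2 * real j * log 2 (1 + real d / L)"
      using j1 by (simp add: mult.assoc)
    then show ?thesis using True Xnn j1 unfolding L_def[symmetric]
      by (smt (verit) mult_right_mono of_nat_0_le_iff)
  next
    case False
    define lg where "lg = log 2 (6 * y)"
    have lgpos: "0 < lg"
    proof -
      have "0 < real j * lg" using hL L1 by (simp add: lg_def)
      then show ?thesis using j1 by (simp add: zero_less_mult_iff)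
    qed
    define r where "r = sqrt (6 * y)"
    have r0: "0 < r" using y1 by (simp add: r_def)
    have lg3: "lg \<le> 3 * r" unfolding lg_def r_def by (rule log2_le_3sqrt) (use y1 in simp)
    have "r / 18 = y / (3 * r)"
    proof -
      have "r * r = 6 * y" using y1 by (simp add: r_def)
      then show ?thesis using r0 by (simp add: field_simps)
    qed
    also have "\<dots> \<le> y / lg" using lg3 lgpos y1 by (intro divide_left_mono) auto
    also have "\<dots> = real d / (real j * lg)" using j1 by (simp add: y_def)
    also have "\<dots> \<le> real d / L" using hL L1 lgpos j1 unfolding lg_def[symmetric]
      by (intro divide_left_mono) auto
    finally have rL: "r / 18 \<le> real d / L" .
    have pm: "\<And>x::real. (x ^ 18) ^ 2 = x ^ 36" by (simp add: power_mult[symmetric])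
    have b: "1 + r \<le> (1 + r / 18) ^ 18"
      using Bernoulli_inequality[of "r / 18" 18] r0 by simp
    have "6 * y = r ^ 2" using y1 by (simp add: r_def)
    also have "\<dots> \<le> (1 + r) ^ 2" using r0 by (intro power_mono) auto
    also have "\<dots> \<le> ((1 + r / 18) ^ 18) ^ 2" using b r0 by (intro power_mono) auto
    also have "\<dots> = (1 + r / 18) ^ 36" using pm[of "1 + r / 18"] .
    finally have "6 * y \<le> (1 + r / 18) ^ 36" .
    then have "lg \<le> log 2 ((1 + r / 18) ^ 36)" unfolding lg_def
      using y1 r0 by (subst log_le_cancel_iff) auto
    also have "\<dots> = 36 * log 2 (1 + r / 18)" using r0 by (simp add: log_nat_power)
    also have "\<dots> \<le> 36 * log 2 (1 + real d / L)" using rL r0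
      by (subst mult_le_cancel_left_pos, simp, subst log_le_cancel_iff[OF _ _ dL_pos[OF L1]]) auto
    finally have "lg \<le> 36 * log 2 (1 + real d / L)" .
    then have "real j * lg \<le> real j * (36 * log 2 (1 + real d / L))"
      by (intro mult_left_mono) auto
    with hL show ?thesis unfolding L_def[symmetric] lg_def[symmetric] by simp
  qed
qed

lemma lower_a1:
  fixes j d n :: nat
  assumes j1: "j \<le> 1" and d1: "1 \<le> d" and dn: "d \<le> n" and n2: "2 \<le> n"
  shows "(1 + real j) * log 2 (1 + real d / log 2 (real n)) \<le> 4 * log 2 (real n)"
proof -
  define L where "L = log 2 (real n)"
  have L1: "1 \<le> L" using n2 by (simp add: L_def)
  have Ld: "log 2 (real d) \<le> L" unfolding L_def using dn d1 by simp
  have "real d / L \<le> real d" using L1 d1 by (simp add: field_simps)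
  moreover have "0 \<le> real d / L" using L1 by simp
  ultimately have "log 2 (1 + real d / L) \<le> log 2 (2 * real d)"
    using d1 L1 by (subst log_le_cancel_iff[OF _ dL_pos[OF L1]]) auto
  also have "\<dots> = 1 + log 2 (real d)" using d1 by (simp add: log_mult)
  finally have X: "log 2 (1 + real d / L) \<le> 2 * L" using Ld L1 by simp
  have Xnn: "0 \<le> log 2 (1 + real d / L)" using log_1p_nonneg[OF L1] .
  have "(1 + real j) * log 2 (1 + real d / L) \<le> 2 * log 2 (1 + real d / L)"
    using j1 Xnn by (intro mult_right_mono) auto
  with X show ?thesis unfolding L_def[symmetric] by simp
qed

lemma lower_a2:
  fixes m d n :: nat
  assumes m1: "1 \<le> m" and md: "m < d" and n2: "2 \<le> n"
    and nb: "(2 * real d / real m) ^ m < real n"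
  shows "(real m + 2) * log 2 (1 + real d / log 2 (real n)) \<le> 4 * log 2 (real n)"
proof -
  define L where "L = log 2 (real n)"
  have L1: "1 \<le> L" using n2 by (simp add: L_def)
  define z where "z = 2 * real d / real m"
  have z2: "2 \<le> z" using m1 md by (simp add: z_def field_simps)
  have nbz: "z ^ m < real n" using nb by (simp add: z_def)
  have "log 2 (z ^ m) < L" unfolding L_def using nbz z2 n2
    by (subst log_less_cancel_iff) auto
  then have hL: "real m * log 2 z < L" using z2 by (simp add: log_nat_power)
  have lz1: "1 \<le> log 2 z" using z2 by simp
  have "real m \<le> real m * log 2 z" using lz1
    by (metis mult_left_mono mult.right_neutral of_nat_0_le_iff)
  then have mL: "real m < L" using hL by linarith
  have "real d / L \<le> real d / real m" using mL m1 by (intro divide_left_mono) auto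
  also have "\<dots> \<le> z - 1"
  proof -
    have "1 \<le> real d / real m" using md m1 by simp
    moreover have "z = 2 * (real d / real m)" by (simp add: z_def)
    ultimately show ?thesis by linarith
  qed
  finally have dLz: "real d / L \<le> z - 1" .
  have "0 \<le> real d / L" using L1 by simp
  then have "log 2 (1 + real d / L) \<le> log 2 z" using dLz z2 by (subst log_le_cancel_iff[OF _ dL_pos[OF L1]]) auto
  moreover have Xnn: "0 \<le> log 2 (1 + real d / L)" using log_1p_nonneg[OF L1] .
  ultimately have "(real m + 2) * log 2 (1 + real d / L) \<le> (3 * real m) * log 2 z"
    using m1 by (intro mult_mono) auto
  also have "\<dots> < 3 * L" using hL by simp
  finally show ?thesis unfolding L_def[symmetric] using L1 by simp
qed

definition sc :: "complex \<Rightarrow> (int list \<Rightarrow> complex) \<Rightarrow> (int list \<Rightarrow> complex)" where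
  "sc c f = (\<lambda>x. c * f x)"

definition ee :: "int list \<Rightarrow> int list \<Rightarrow> complex" where
  "ee k = (\<lambda>x. if x = k then 1 else 0)"

definition Rs :: "nat \<Rightarrow> (int list \<Rightarrow> complex) \<Rightarrow> (int list \<Rightarrow> complex)" where
  "Rs d f = (\<lambda>x. if x \<in> freqs d then f x else 0)"

lemma sum_fun_apply: "(sum g K) x = (\<Sum>k\<in>K. g k x)"
  for g :: "'c \<Rightarrow> ('a \<Rightarrow> 'b::comm_monoid_add)"
  by (induction K rule: infinite_finite_induct) auto

interpretation V: vector_space sc
  by unfold_locales (auto simp: sc_def fun_eq_iff algebra_simps)

lemma inj_ee: "inj ee"
  by (auto simp: inj_def ee_def fun_eq_iff split: if_splits)

lemma span_ee_supp:
  "V.span (ee ` S) \<subseteq> {g. \<forall>x. x \<notin> S \<longrightarrow> g x = 0}"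
proof (rule V.span_minimal)
  show "ee ` S \<subseteq> {g. \<forall>x. x \<notin> S \<longrightarrow> g x = 0}" by (auto simp: ee_def)
  show "V.subspace {g. \<forall>x. x \<notin> S \<longrightarrow> g x = 0}"
    by (auto simp: V.subspace_def sc_def)
qed

lemma indep_ee: assumes "finite S" shows "V.independent (ee ` S)"
proof -
  have "c v = 0" if h: "(\<Sum>v\<in>ee ` S. sc (c v) v) = 0" and v: "v \<in> ee ` S" for c v
  proof -
    obtain k where k: "k \<in> S" "v = ee k" using v by auto
    have "0 = (\<Sum>v\<in>ee ` S. sc (c v) v) k" using h by simp
    also have "\<dots> = (\<Sum>v\<in>ee ` S. c v * v k)" by (simp add: sum_fun_apply sc_def)
    also have "\<dots> = (\<Sum>k'\<in>S. c (ee k') * ee k' k)"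
      by (subst sum.reindex) (use inj_ee in \<open>auto simp: inj_on_def\<close>)
    also have "\<dots> = (\<Sum>k'\<in>S. if k' = k then c (ee k) else 0)"
      by (rule sum.cong) (auto simp: ee_def)
    also have "\<dots> = c (ee k)" using k assms by simp
    finally show ?thesis using k by simp
  qed
  then show ?thesis using assms by (auto simp: V.dependent_finite)
qed

lemma Rs_W: "Rs d f \<in> Wspace d" by (simp add: Rs_def Wspace_def)
lemma W_Rs: "f \<in> Wspace d \<Longrightarrow> Rs d f = f" by (auto simp: Rs_def Wspace_def fun_eq_iff)
lemma zero_W: "(\<lambda>k. 0) \<in> Wspace d" by (simp add: Wspace_def)

lemma low_rank_opsD:
  assumes "A \<in> low_rank_ops d n"
  shows "f \<in> Wspace d \<Longrightarrow> g \<in> Wspace d \<Longrightarrow> A (\<lambda>k. f k + g k) = (\<lambda>k. A f k + A g k)"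
    and "f \<in> Wspace d \<Longrightarrow> A (\<lambda>k. c * f k) = (\<lambda>k. c * A f k)"
    and "f \<in> Wspace d \<Longrightarrow> A f \<in> L2space d"
    and "\<exists>B. finite B \<and> card B < n \<and> B \<subseteq> L2space d \<and>
          (\<forall>f\<in>Wspace d. \<exists>c. A f = (\<lambda>k. \<Sum>b\<in>B. c b * b k))"
proof -
  have P: "(\<forall>f\<in>Wspace d. \<forall>g\<in>Wspace d. A (\<lambda>k. f k + g k) = (\<lambda>k. A f k + A g k)) \<and>
     (\<forall>f\<in>Wspace d. \<forall>c. A (\<lambda>k. c * f k) = (\<lambda>k. c * A f k)) \<and>
     (\<forall>f\<in>Wspace d. A f \<in> L2space d) \<and>
     (\<exists>B. finite B \<and> card B < n \<and> B \<subseteq> L2space d \<and>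
          (\<forall>f\<in>Wspace d. \<exists>c. A f = (\<lambda>k. \<Sum>b\<in>B. c b * b k)))"
    using assms unfolding low_rank_ops_def by (rule CollectD)
  show "f \<in> Wspace d \<Longrightarrow> g \<in> Wspace d \<Longrightarrow> A (\<lambda>k. f k + g k) = (\<lambda>k. A f k + A g k)"
    using P by simp
  show "f \<in> Wspace d \<Longrightarrow> A (\<lambda>k. c * f k) = (\<lambda>k. c * A f k)"
    using P by simp
  show "f \<in> Wspace d \<Longrightarrow> A f \<in> L2space d"
    using P by simp
  show "\<exists>B. finite B \<and> card B < n \<and> B \<subseteq> L2space d \<and>
          (\<forall>f\<in>Wspace d. \<exists>c. A f = (\<lambda>k. \<Sum>b\<in>B. c b * b k))"
    using P by (elim conjE)
qed

lemma low_rank_zero: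
  assumes "A \<in> low_rank_ops d n" shows "A (\<lambda>k. 0) = (\<lambda>k. 0)"
proof -
  show ?thesis using low_rank_opsD(2)[OF assms zero_W, of 0] by simp
qed

lemma kernel_vector:
  assumes A: "A \<in> low_rank_ops d n" and S: "S \<subseteq> freqs d" "card S = n"
  shows "\<exists>f. f \<noteq> (\<lambda>k. 0) \<and> (\<forall>x. x \<notin> S \<longrightarrow> f x = 0) \<and> A f = (\<lambda>k. 0)"
proof -
  have fS: "finite S" by (rule finite_subset[OF S(1)]) simp
  define A' where "A' = (\<lambda>f. A (Rs d f))"
  have addA: "\<And>f g. f \<in> Wspace d \<Longrightarrow> g \<in> Wspace d \<Longrightarrow> A (\<lambda>k. f k + g k) = (\<lambda>k. A f k + A g k)"
    and scA: "\<And>f c. f \<in> Wspace d \<Longrightarrow> A (\<lambda>k. c * f k) = (\<lambda>k. c * A f k)"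
    using low_rank_opsD[OF A] by auto
  obtain B where B: "finite B" "card B < n" "B \<subseteq> L2space d"
      "\<forall>f\<in>Wspace d. \<exists>c. A f = (\<lambda>k. \<Sum>b\<in>B. c b * b k)"
    using low_rank_opsD(4)[OF A] by (elim exE conjE)
  interpret H: module_hom sc sc A'
  proof unfold_locales
    fix b1 b2
    have "Rs d (b1 + b2) = (\<lambda>x. Rs d b1 x + Rs d b2 x)" by (auto simp: Rs_def)
    then show "A' (b1 + b2) = A' b1 + A' b2"
      by (simp add: A'_def addA Rs_W plus_fun_def)
  next
    fix r b
    have "Rs d (sc r b) = (\<lambda>x. r * Rs d b x)" by (auto simp: Rs_def sc_def)
    then show "A' (sc r b) = sc r (A' b)"
      by (simp add: A'_def scA Rs_W sc_def)
  qed
  have imgB: "A' ` (ee ` S) \<subseteq> V.span B"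
  proof
    fix y assume "y \<in> A' ` (ee ` S)"
    then obtain k where k: "k \<in> S" "y = A' (ee k)" by auto
    have "Rs d (ee k) \<in> Wspace d" by (rule Rs_W)
    then obtain c where "A (Rs d (ee k)) = (\<lambda>x. \<Sum>b\<in>B. c b * b x)" using B(4) by blast
    then have "y = (\<Sum>b\<in>B. sc (c b) b)" using k by (simp add: A'_def sum_fun_apply sc_def fun_eq_iff)
    then show "y \<in> V.span B" by (simp add: V.span_sum V.span_scale V.span_base)
  qed
  have ninj: "\<not> inj_on A' (V.span (ee ` S))"
  proof
    assume inj: "inj_on A' (V.span (ee ` S))"
    have ind: "V.independent (A' ` (ee ` S))"
      using H.independent_injective_image[OF indep_ee[OF fS] inj] .
    have "card (A' ` (ee ` S)) = card (ee ` S)"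
      using inj V.span_superset by (intro card_image) (rule inj_on_subset)
    also have "\<dots> = n" using S inj_ee by (simp add: card_image inj_on_subset)
    finally have "n \<le> card B"
      using V.independent_span_bound[OF B(1) ind imgB] by simp
    with B(2) show False by simp
  qed
  have "\<not> (\<forall>x\<in>V.span (ee ` S). A' x = 0 \<longrightarrow> x = 0)"
    using ninj H.inj_on_iff_eq_0[OF V.subspace_span, of "ee ` S"] by simp
  then obtain f where f: "f \<in> V.span (ee ` S)" "A' f = 0" "f \<noteq> 0"
    by auto
  have supp: "\<forall>x. x \<notin> S \<longrightarrow> f x = 0" using span_ee_supp f(1) by blast
  then have "f \<in> Wspace d" using S by (auto simp: Wspace_def)
  then have "A f = (\<lambda>k. 0)" using f(2) W_Rs by (simp add: A'_def zero_fun_def)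
  moreover have "f \<noteq> (\<lambda>k. 0)" using f(3) by (simp add: zero_fun_def)
  ultimately show ?thesis using supp by blast
qed

lemma ee_W: "k \<in> freqs d \<Longrightarrow> ee k \<in> Wspace d"
  by (auto simp: Wspace_def ee_def)

lemma normW_alt: "normW d f = sqrt (\<Sum>k\<in>freqs d. (1 + real (lvl k)) * (cmod (f k))\<^sup>2)"
proof -
  have "real_of_int (sum_list (map abs k)) = real (lvl k)" for k
    using sum_list_abs_nonneg[of k] by (simp add: lvl_def)
  then show ?thesis by (simp add: normW_def)
qed

lemma normW_sq: "(normW d f)\<^sup>2 = (\<Sum>k\<in>freqs d. (1 + real (lvl k)) * (cmod (f k))\<^sup>2)"
  unfolding normW_alt by (rule real_sqrt_pow2) (intro sum_nonneg, simp)

lemma normW_nonneg: "0 \<le> normW d f" unfolding normW_alt by (simp add: sum_nonneg)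
lemma normL2_nonneg: "0 \<le> normL2 g"
  unfolding normL2_def by (simp add: infsum_nonneg)

lemma finsupp_summable:
  assumes "finite K" "\<And>x. x \<notin> K \<Longrightarrow> g x = 0"
  shows "(\<lambda>x. (cmod (g x))\<^sup>2) summable_on UNIV"
proof -
  have "(\<lambda>x. (cmod (g x))\<^sup>2) summable_on K" using assms(1) by simp
  then show ?thesis by (subst summable_on_cong_neutral[where T=K]) (use assms(2) in auto)
qed

lemma finsupp_infsum:
  assumes "finite K" "\<And>x. x \<notin> K \<Longrightarrow> g x = 0"
  shows "infsum (\<lambda>x. (cmod (g x))\<^sup>2) UNIV = (\<Sum>x\<in>K. (cmod (g x))\<^sup>2)"
proof -
  have "infsum (\<lambda>x. (cmod (g x))\<^sup>2) UNIV = infsum (\<lambda>x. (cmod (g x))\<^sup>2) K"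
    by (rule infsum_cong_neutral) (use assms(2) in auto)
  also have "\<dots> = (\<Sum>x\<in>K. (cmod (g x))\<^sup>2)" using assms(1) by simp
  finally show ?thesis .
qed

lemma finsupp_normL2:
  assumes "finite K" "\<And>x. x \<notin> K \<Longrightarrow> g x = 0"
  shows "normL2 g = sqrt (\<Sum>x\<in>K. (cmod (g x))\<^sup>2)"
  unfolding normL2_def using finsupp_infsum[OF assms] by simp

lemma W_decomp: "f \<in> Wspace d \<Longrightarrow> f = (\<lambda>x. \<Sum>k\<in>freqs d. f k * ee k x)"
proof (rule ext)
  fix x assume f: "f \<in> Wspace d"
  have "(\<Sum>k\<in>freqs d. f k * ee k x) = (\<Sum>k\<in>freqs d. if k = x then f x else 0)"
    by (rule sum.cong) (auto simp: ee_def)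
  also have "\<dots> = (if x \<in> freqs d then f x else 0)" by simp
  also have "\<dots> = f x" using f unfolding Wspace_def by auto
  finally show "f x = (\<Sum>k\<in>freqs d. f k * ee k x)" by simp
qed

lemma A_decomp:
  assumes A: "A \<in> low_rank_ops d n" and f: "f \<in> Wspace d"
  shows "A f = (\<lambda>x. \<Sum>k\<in>freqs d. f k * A (ee k) x)"
proof -
  have "K \<subseteq> freqs d \<Longrightarrow> (\<lambda>x. \<Sum>k\<in>K. f k * ee k x) \<in> Wspace d \<and>
     A (\<lambda>x. \<Sum>k\<in>K. f k * ee k x) = (\<lambda>x. \<Sum>k\<in>K. f k * A (ee k) x)" for K
  proof (induction K rule: infinite_finite_induct)
    case (infinite K)
    then show ?case using finite_subset[of K "freqs d"] by simp
  next
    case empty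
    then show ?case using low_rank_zero[OF A] zero_W[of d] by simp
  next
    case (insert k K)
    then have k: "k \<in> freqs d" and IH: "(\<lambda>x. \<Sum>k\<in>K. f k * ee k x) \<in> Wspace d"
      "A (\<lambda>x. \<Sum>k\<in>K. f k * ee k x) = (\<lambda>x. \<Sum>k\<in>K. f k * A (ee k) x)" by auto
    have e1: "(\<lambda>x. f k * ee k x) \<in> Wspace d" using k by (auto simp: Wspace_def ee_def)
    have e2: "A (\<lambda>x. f k * ee k x) = (\<lambda>x. f k * A (ee k) x)"
      using low_rank_opsD(2)[OF A ee_W[OF k]] .
    have eq: "(\<lambda>x. \<Sum>k\<in>insert k K. f k * ee k x) = (\<lambda>x. f k * ee k x + (\<Sum>k\<in>K. f k * ee k x))"
      using insert by simp
    have W: "(\<lambda>x. \<Sum>k\<in>insert k K. f k * ee k x) \<in> Wspace d"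
      using IH(1) e1 unfolding eq by (auto simp: Wspace_def)
    have "A (\<lambda>x. \<Sum>k\<in>insert k K. f k * ee k x)
        = (\<lambda>x. A (\<lambda>x. f k * ee k x) x + A (\<lambda>x. \<Sum>k\<in>K. f k * ee k x) x)"
      unfolding eq by (rule low_rank_opsD(1)[OF A e1 IH(1)])
    also have "\<dots> = (\<lambda>x. \<Sum>k\<in>insert k K. f k * A (ee k) x)"
      using insert IH(2) e2 by simp
    finally show ?case using W by simp
  qed
  from this[of "freqs d"] W_decomp[OF f] show ?thesis by simp
qed

lemma summable_sum_fin:
  fixes g :: "'i \<Rightarrow> 'a \<Rightarrow> real"
  assumes "\<And>k. k \<in> K \<Longrightarrow> g k summable_on UNIV"
  shows "(\<lambda>x. \<Sum>k\<in>K. g k x) summable_on UNIV"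
  using assms
proof (induction K rule: infinite_finite_induct)
  case (insert k K)
  then show ?case by (simp add: summable_on_add)
qed auto

lemma infsum_sum_fin:
  fixes g :: "'i \<Rightarrow> 'a \<Rightarrow> real"
  assumes "\<And>k. k \<in> K \<Longrightarrow> g k summable_on UNIV"
  shows "0 \<le> infsum (\<lambda>x. \<Sum>k\<in>K. g k x) UNIV \<or> True"
  by simp

lemma sq_diff_le: "(cmod (a - b))\<^sup>2 \<le> 2 * (cmod a)\<^sup>2 + 2 * (cmod b)\<^sup>2"
proof -
  have "cmod (a - b) \<le> cmod a + cmod b" by (rule norm_triangle_ineq4)
  then have "(cmod (a - b))\<^sup>2 \<le> (cmod a + cmod b)\<^sup>2" by (intro power_mono) auto
  also have "\<dots> \<le> 2 * (cmod a)\<^sup>2 + 2 * (cmod b)\<^sup>2"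
  proof -
    have "0 \<le> (cmod a - cmod b)\<^sup>2" by simp
    then show ?thesis unfolding power2_sum power2_diff by linarith
  qed
  finally show ?thesis .
qed

lemma opnorm_bound:
  assumes A: "A \<in> low_rank_ops d n"
  shows "\<exists>M\<ge>0. \<forall>f\<in>Wspace d. normL2 (\<lambda>k. f k - A f k) \<le> M * normW d f"
proof -
  define F where "F = freqs d"
  define h where "h k = (\<lambda>x. ee k x - A (ee k) x)" for k
  have sumh: "(\<lambda>x. (cmod (h k x))\<^sup>2) summable_on UNIV" if k: "k \<in> F" for k
  proof (rule summable_on_comparison_test)
    have s1: "(\<lambda>x. (cmod (ee k x))\<^sup>2) summable_on UNIV"
      by (rule finsupp_summable[of "{k}"]) (auto simp: ee_def)
    have "A (ee k) \<in> L2space d" using low_rank_opsD(3)[OF A ee_W] k by (simp add: F_def)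
    then have s2: "(\<lambda>x. (cmod (A (ee k) x))\<^sup>2) summable_on UNIV" by (simp add: L2space_def)
    show "(\<lambda>x. 2 * (cmod (ee k x))\<^sup>2 + 2 * (cmod (A (ee k) x))\<^sup>2) summable_on UNIV"
      by (intro summable_on_add summable_on_cmult_right s1 s2)
    show "(cmod (h k x))\<^sup>2 \<le> 2 * (cmod (ee k x))\<^sup>2 + 2 * (cmod (A (ee k) x))\<^sup>2" for x
      unfolding h_def by (rule sq_diff_le)
  qed simp
  define G where "G x = (\<Sum>k\<in>F. (cmod (h k x))\<^sup>2)" for x
  have sG: "G summable_on UNIV" unfolding G_def by (rule summable_sum_fin) (rule sumh)
  define M where "M = sqrt (infsum G UNIV)"
  have IG0: "0 \<le> infsum G UNIV" by (rule infsum_nonneg) (simp add: G_def sum_nonneg)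
  have "normL2 (\<lambda>k. f k - A f k) \<le> M * normW d f" if f: "f \<in> Wspace d" for f
  proof -
    have eq: "(\<lambda>x. f x - A f x) = (\<lambda>x. \<Sum>k\<in>F. f k * h k x)"
      apply (subst W_decomp[OF f])
      apply (subst A_decomp[OF A f])
      apply (simp add: h_def F_def right_diff_distrib sum_subtractf)
      done
    have fW: "(\<Sum>k\<in>F. (cmod (f k))\<^sup>2) \<le> (normW d f)\<^sup>2"
      unfolding normW_sq F_def
      by (rule sum_mono) (simp add: mult_le_cancel_right1)
    have pt: "(cmod (f x - A f x))\<^sup>2 \<le> (normW d f)\<^sup>2 * G x" for x
    proof -
      have ex: "f x - A f x = (\<Sum>k\<in>F. f k * h k x)" using fun_cong[OF eq, of x] by simp
      have "cmod (f x - A f x) \<le> (\<Sum>k\<in>F. cmod (f k) * cmod (h k x))"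
        unfolding ex by (rule order_trans[OF norm_sum]) (simp add: norm_mult)
      then have "(cmod (f x - A f x))\<^sup>2 \<le> (\<Sum>k\<in>F. cmod (f k) * cmod (h k x))\<^sup>2"
        by (intro power_mono) auto
      also have "\<dots> \<le> (\<Sum>k\<in>F. (cmod (f k))\<^sup>2) * (\<Sum>k\<in>F. (cmod (h k x))\<^sup>2)"
        by (rule Cauchy_Schwarz_ineq_sum)
      also have "\<dots> \<le> (normW d f)\<^sup>2 * G x"
        unfolding G_def using fW by (intro mult_right_mono) (auto intro: sum_nonneg)
      finally show ?thesis .
    qed
    have sB: "(\<lambda>x. (normW d f)\<^sup>2 * G x) summable_on UNIV"
      by (rule summable_on_cmult_right[OF sG])
    have sL: "(\<lambda>x. (cmod (f x - A f x))\<^sup>2) summable_on UNIV"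
      by (rule summable_on_comparison_test[OF sB]) (use pt in auto)
    have "infsum (\<lambda>x. (cmod (f x - A f x))\<^sup>2) UNIV \<le> infsum (\<lambda>x. (normW d f)\<^sup>2 * G x) UNIV"
      by (rule infsum_mono[OF sL sB]) (use pt in auto)
    also have "\<dots> = (normW d f)\<^sup>2 * infsum G UNIV"
      by (rule infsum_cmult_right) (use sG in auto)
    finally have "normL2 (\<lambda>k. f k - A f k) \<le> sqrt ((normW d f)\<^sup>2 * infsum G UNIV)"
      unfolding normL2_def by simp
    also have "\<dots> = normW d f * M"
      by (simp add: M_def real_sqrt_mult normW_nonneg)
    finally show ?thesis by (simp add: mult.commute)
  qed
  moreover have "0 \<le> M" using IG0 by (simp add: M_def)
  ultimately show ?thesis by blast
qed

definition ratio :: "nat \<Rightarrow> ((int list \<Rightarrow> complex) \<Rightarrow> (int list \<Rightarrow> complex)) \<Rightarrow> (int list \<Rightarrow> complex) \<Rightarrow> real" where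
  "ratio d A f = normL2 (\<lambda>k. f k - A f k) / normW d f"

lemma opnorm_diff_ratio: "opnorm_diff d A = (SUP f\<in>Wspace d - {\<lambda>k. 0}. ratio d A f)"
  by (simp add: opnorm_diff_def ratio_def)

lemma ratio_nonneg: "0 \<le> ratio d A f"
  unfolding ratio_def using normL2_nonneg normW_nonneg by (rule divide_nonneg_nonneg)

lemma W_nonempty: "ee (replicate d 0) \<in> Wspace d - {\<lambda>k. 0}"
proof -
  have "replicate d 0 \<in> freqs d" by (auto simp: freqs_def)
  moreover have "ee (replicate d 0) \<noteq> (\<lambda>k. 0)"
    by (auto simp: ee_def fun_eq_iff)
  ultimately show ?thesis using ee_W by auto
qed

lemma ratio_bdd:
  assumes A: "A \<in> low_rank_ops d n"
  shows "bdd_above (ratio d A ` (Wspace d - {\<lambda>k. 0}))"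
proof -
  obtain M where M: "0 \<le> M" "\<And>f. f \<in> Wspace d \<Longrightarrow> normL2 (\<lambda>k. f k - A f k) \<le> M * normW d f"
    using opnorm_bound[OF A] by blast
  have "ratio d A f \<le> M" if f: "f \<in> Wspace d" for f
  proof (cases "normW d f = 0")
    case True then show ?thesis using M by (simp add: ratio_def)
  next
    case False
    then have "0 < normW d f" using normW_nonneg[of d f] by simp
    then show ?thesis using M(2)[OF f] by (simp add: ratio_def pos_divide_le_eq)
  qed
  then show ?thesis by (intro bdd_aboveI[of _ M]) auto
qed

lemma ratio_le_opnorm:
  assumes A: "A \<in> low_rank_ops d n" and f: "f \<in> Wspace d" "f \<noteq> (\<lambda>k. 0)"
  shows "ratio d A f \<le> opnorm_diff d A"
  unfolding opnorm_diff_ratio by (rule cSUP_upper[OF _ ratio_bdd[OF A]]) (use f in auto)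

lemma opnorm_nonneg:
  assumes A: "A \<in> low_rank_ops d n"
  shows "0 \<le> opnorm_diff d A"
proof -
  have "ee (replicate d 0) \<in> Wspace d" "ee (replicate d 0) \<noteq> (\<lambda>k. 0)" using W_nonempty by auto
  from ratio_le_opnorm[OF A this] show ?thesis using ratio_nonneg[of d A "ee (replicate d 0)"] by linarith
qed

lemma zero_op: assumes "1 \<le> n" shows "(\<lambda>f k. 0) \<in> low_rank_ops d n"
  unfolding low_rank_ops_def L2space_def using assms
  by (auto intro!: exI[of _ "{}"])

lemma approx_ge:
  assumes "1 \<le> n" "\<And>A. A \<in> low_rank_ops d n \<Longrightarrow> c \<le> opnorm_diff d A"
  shows "c \<le> approx_num d n"
  unfolding approx_num_def
  by (rule cINF_greatest) (use assms zero_op in auto)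

lemma approx_le:
  assumes "A \<in> low_rank_ops d n"
  shows "approx_num d n \<le> opnorm_diff d A"
  unfolding approx_num_def
proof (rule cINF_lower[OF _ assms])
  show "bdd_below (opnorm_diff d ` low_rank_ops d n)"
    by (rule bdd_belowI[of _ 0]) (auto intro: opnorm_nonneg)
qed

lemma approx_lower:
  assumes n1: "1 \<le> n" and S: "S \<subseteq> freqs d" "card S = n" and lv: "\<forall>k\<in>S. lvl k \<le> j"
  shows "1 / sqrt (1 + real j) \<le> approx_num d n"
proof (rule approx_ge[OF n1])
  fix A assume A: "A \<in> low_rank_ops d n"
  obtain f where f: "f \<noteq> (\<lambda>k. 0)" "\<forall>x. x \<notin> S \<longrightarrow> f x = 0" "A f = (\<lambda>k. 0)"
    using kernel_vector[OF A S] by blast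
  have fS: "finite S" by (rule finite_subset[OF S(1)]) simp
  have fW: "f \<in> Wspace d" using f(2) S(1) by (auto simp: Wspace_def)
  define Q where "Q = (\<Sum>x\<in>S. (cmod (f x))\<^sup>2)"
  obtain x0 where x0: "f x0 \<noteq> 0" using f(1) by auto
  then have x0S: "x0 \<in> S" using f(2) by auto
  have Qpos: "0 < Q" unfolding Q_def
    by (rule sum_pos2[OF fS x0S]) (use x0 in auto)
  have L2: "normL2 (\<lambda>k. f k - A f k) = sqrt Q"
    unfolding f(3) Q_def using finsupp_normL2[OF fS, of f] f(2) by simp
  have "(normW d f)\<^sup>2 = (\<Sum>k\<in>S. (1 + real (lvl k)) * (cmod (f k))\<^sup>2)"
    unfolding normW_sq by (rule sum.mono_neutral_right) (use S f(2) in auto)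
  also have "\<dots> \<le> (\<Sum>k\<in>S. (1 + real j) * (cmod (f k))\<^sup>2)"
    by (rule sum_mono) (use lv in \<open>auto intro!: mult_right_mono\<close>)
  also have "\<dots> = (1 + real j) * Q" by (simp add: Q_def sum_distrib_left)
  finally have W2: "(normW d f)\<^sup>2 \<le> (1 + real j) * Q" .
  have "Q \<le> (normW d f)\<^sup>2"
  proof -
    have "Q \<le> (\<Sum>k\<in>S. (1 + real (lvl k)) * (cmod (f k))\<^sup>2)"
      unfolding Q_def by (rule sum_mono) (simp add: mult_le_cancel_right1)
    also have "\<dots> = (normW d f)\<^sup>2"
      unfolding normW_sq by (rule sum.mono_neutral_right[symmetric]) (use S f(2) in auto)
    finally show ?thesis .
  qed
  then have "0 < (normW d f)\<^sup>2" using Qpos by linarith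
  then have "normW d f \<noteq> 0" by auto
  then have Wpos: "0 < normW d f" using normW_nonneg[of d f] by linarith
  have "normW d f \<le> sqrt ((1 + real j) * Q)"
    using W2 normW_nonneg[of d f] by (simp add: real_le_rsqrt)
  then have "sqrt Q / sqrt ((1 + real j) * Q) \<le> sqrt Q / normW d f"
    using Wpos Qpos by (intro divide_left_mono) auto
  also have "sqrt Q / sqrt ((1 + real j) * Q) = 1 / sqrt (1 + real j)"
  proof -
    have s: "sqrt ((1 + real j) * Q) = sqrt (1 + real j) * sqrt Q" by (rule real_sqrt_mult)
    have "0 < sqrt Q" "0 < sqrt (1 + real j)" using Qpos by auto
    then show ?thesis unfolding s by (simp add: field_simps)
  qed
  finally have "1 / sqrt (1 + real j) \<le> ratio d A f" by (simp add: ratio_def L2)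
  also have "\<dots> \<le> opnorm_diff d A" by (rule ratio_le_opnorm[OF A fW f(1)])
  finally show "1 / sqrt (1 + real j) \<le> opnorm_diff d A" .
qed

lemma ee_L2: "k \<in> freqs d \<Longrightarrow> ee k \<in> L2space d"
  unfolding L2space_def
  by (auto simp: ee_def freqs_def split: if_splits intro!: finsupp_summable[of "{k}"])

lemma approx_upper:
  assumes T: "T \<subseteq> freqs d" "card T < n" and M: "0 \<le> M"
    and bnd: "\<And>f. f \<in> Wspace d \<Longrightarrow> sqrt (\<Sum>k\<in>freqs d - T. (cmod (f k))\<^sup>2) \<le> M * normW d f"
  shows "approx_num d n \<le> M"
proof -
  have fT: "finite T" by (rule finite_subset[OF T(1)]) simp
  define P where "P = (\<lambda>f::int list \<Rightarrow> complex. \<lambda>x. if x \<in> T then f x else 0)"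
  have PL2: "P f \<in> L2space d" for f
    unfolding L2space_def
  proof safe
    show "length k \<noteq> d \<Longrightarrow> P f k = 0" for k using T(1) by (auto simp: P_def freqs_def)
    show "(\<lambda>k. (cmod (P f k))\<^sup>2) summable_on UNIV"
      by (rule finsupp_summable[OF fT]) (simp add: P_def)
  qed
  have Prep: "\<exists>c. P f = (\<lambda>k. \<Sum>b\<in>ee ` T. c b * b k)" for f
  proof (intro exI ext)
    fix x
    have "(\<Sum>b\<in>ee ` T. f (inv_into T ee b) * b x) = (\<Sum>k\<in>T. f (inv_into T ee (ee k)) * ee k x)"
      by (rule sum.reindex[unfolded comp_def]) (use inj_ee in \<open>auto simp: inj_on_def\<close>)
    also have "\<dots> = (\<Sum>k\<in>T. if k = x then f x else 0)"
    proof (rule sum.cong[OF refl])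
      fix k assume k: "k \<in> T"
      have "inv_into T ee (ee k) = k"
        by (rule inv_into_f_f[OF inj_on_subset[OF inj_ee subset_UNIV] k])
      then show "f (inv_into T ee (ee k)) * ee k x = (if k = x then f x else 0)"
        by (simp add: ee_def)
    qed
    also have "\<dots> = P f x" using fT by (simp add: P_def)
    finally show "P f x = (\<Sum>b\<in>ee ` T. f (inv_into T ee b) * b x)" by simp
  qed
  have P1: "\<forall>f\<in>Wspace d. \<forall>g\<in>Wspace d. P (\<lambda>k. f k + g k) = (\<lambda>k. P f k + P g k)"
    by (simp add: P_def fun_eq_iff)
  have P2: "\<forall>f\<in>Wspace d. \<forall>c. P (\<lambda>k. c * f k) = (\<lambda>k. c * P f k)"
    by (simp add: P_def fun_eq_iff)
  have P3: "\<forall>f\<in>Wspace d. P f \<in> L2space d" using PL2 by simp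
  have P4: "\<exists>B. finite B \<and> card B < n \<and> B \<subseteq> L2space d \<and>
          (\<forall>f\<in>Wspace d. \<exists>c. P f = (\<lambda>k. \<Sum>b\<in>B. c b * b k))"
  proof (rule exI[of _ "ee ` T"], intro conjI)
    show "finite (ee ` T)" using fT by simp
    show "card (ee ` T) < n" using card_image_le[OF fT, of ee] T(2) by simp
    show "ee ` T \<subseteq> L2space d" using T(1) ee_L2 by auto
    show "\<forall>f\<in>Wspace d. \<exists>c. P f = (\<lambda>k. \<Sum>b\<in>ee ` T. c b * b k)" using Prep by simp
  qed
  have Pop: "P \<in> low_rank_ops d n"
    unfolding low_rank_ops_def mem_Collect_eq by (intro conjI P1 P2 P3 P4)
  have "opnorm_diff d P \<le> M"
    unfolding opnorm_diff_ratio
  proof (rule cSUP_least)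
    show "Wspace d - {\<lambda>k. 0} \<noteq> {}" using W_nonempty by blast
    fix f assume f: "f \<in> Wspace d - {\<lambda>k. 0}"
    have "normL2 (\<lambda>k. f k - P f k) = sqrt (\<Sum>k\<in>freqs d - T. (cmod (f k - P f k))\<^sup>2)"
      by (rule finsupp_normL2) (use f in \<open>auto simp: P_def Wspace_def\<close>)
    also have "\<dots> = sqrt (\<Sum>k\<in>freqs d - T. (cmod (f k))\<^sup>2)"
      by (simp add: P_def)
    finally have eqn: "normL2 (\<lambda>k. f k - P f k) = sqrt (\<Sum>k\<in>freqs d - T. (cmod (f k))\<^sup>2)" .
    show "ratio d P f \<le> M"
    proof (cases "normW d f = 0")
      case True then show ?thesis using M by (simp add: ratio_def)
    next
      case False
      then have "0 < normW d f" using normW_nonneg[of d f] by simp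
      then show ?thesis using bnd[of f] f eqn by (simp add: ratio_def pos_divide_le_eq)
    qed
  qed
  with approx_le[OF Pop] show ?thesis by simp
qed

definition jn :: "nat \<Rightarrow> nat \<Rightarrow> nat" where
  "jn d n = (LEAST j. n \<le> card (Lev d j))"

lemma jn_props:
  assumes "n \<le> 3 ^ d"
  shows "n \<le> card (Lev d (jn d n))" "jn d n \<le> d"
    "0 < jn d n \<Longrightarrow> card (Lev d (jn d n - 1)) < n"
proof -
  have ex: "n \<le> card (Lev d d)" using assms by (simp add: Lev_d card_freqs)
  show "n \<le> card (Lev d (jn d n))" unfolding jn_def by (rule LeastI[of _ d]) (rule ex)
  show "jn d n \<le> d" unfolding jn_def by (rule Least_le) (rule ex)
  assume "0 < jn d n"
  then have "jn d n - 1 < jn d n" by simp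
  then have "\<not> n \<le> card (Lev d (jn d n - 1))" unfolding jn_def by (rule not_less_Least)
  then show "card (Lev d (jn d n - 1)) < n" by simp
qed

lemma jn_le:
  assumes "n \<le> card (Lev d j)" shows "jn d n \<le> j"
  unfolding jn_def by (rule Least_le) (rule assms)

lemma approx_exact:
  assumes n1: "1 \<le> n" and n3: "n \<le> 3 ^ d"
  shows "approx_num d n = 1 / sqrt (1 + real (jn d n))"
proof (rule antisym)
  define j where "j = jn d n"
  have Jpos: "0 < 1 + real j" by simp
  define T where "T = {k \<in> freqs d. lvl k < j}"
  have T: "T \<subseteq> freqs d" by (auto simp: T_def)
  have cT: "card T < n"
  proof (cases "j = 0")
    case True then have "T = {}" by (simp add: T_def)
    then show ?thesis using n1 by simp
  next
    case False
    then have "T = Lev d (j - 1)" by (auto simp: T_def Lev_def)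
    then show ?thesis using jn_props(3)[OF n3] False by (simp add: j_def)
  qed
  show "approx_num d n \<le> 1 / sqrt (1 + real (jn d n))"
    unfolding j_def[symmetric]
  proof (rule approx_upper[OF T cT])
    show "0 \<le> 1 / sqrt (1 + real j)" by simp
    fix f assume f: "f \<in> Wspace d"
    have "(\<Sum>k\<in>freqs d - T. (cmod (f k))\<^sup>2)
        \<le> (\<Sum>k\<in>freqs d - T. (1 + real (lvl k)) * (cmod (f k))\<^sup>2 / (1 + real j))"
    proof (rule sum_mono)
      fix k assume "k \<in> freqs d - T"
      then have "j \<le> lvl k" by (auto simp: T_def)
      then have "1 + real j \<le> 1 + real (lvl k)" by simp
      then have "(1 + real j) * (cmod (f k))\<^sup>2 \<le> (1 + real (lvl k)) * (cmod (f k))\<^sup>2"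
        by (rule mult_right_mono) simp
      then show "(cmod (f k))\<^sup>2 \<le> (1 + real (lvl k)) * (cmod (f k))\<^sup>2 / (1 + real j)"
        using Jpos by (simp add: pos_le_divide_eq mult.commute)
    qed
    also have "\<dots> \<le> (\<Sum>k\<in>freqs d. (1 + real (lvl k)) * (cmod (f k))\<^sup>2 / (1 + real j))"
      by (rule sum_mono2) auto
    also have "\<dots> = (normW d f)\<^sup>2 / (1 + real j)"
      by (simp add: normW_sq sum_divide_distrib)
    finally have "sqrt (\<Sum>k\<in>freqs d - T. (cmod (f k))\<^sup>2) \<le> sqrt ((normW d f)\<^sup>2 / (1 + real j))"
      by (rule real_sqrt_le_mono)
    also have "\<dots> = 1 / sqrt (1 + real j) * normW d f"
      using normW_nonneg[of d f] by (simp add: real_sqrt_divide)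
    finally show "sqrt (\<Sum>k\<in>freqs d - T. (cmod (f k))\<^sup>2) \<le> 1 / sqrt (1 + real j) * normW d f" .
  qed
  obtain S where S: "S \<subseteq> Lev d (jn d n)" "card S = n"
    using obtain_subset_with_card_n[OF jn_props(1)[OF n3]] by blast
  show "1 / sqrt (1 + real (jn d n)) \<le> approx_num d n"
    by (rule approx_lower[OF n1 _ S(2)]) (use S(1) in \<open>auto simp: Lev_def\<close>)
qed

lemma approx_zero:
  assumes "3 ^ d < n"
  shows "approx_num d n = 0"
proof (rule antisym)
  show "approx_num d n \<le> 0"
    by (rule approx_upper[of "freqs d"]) (use assms in \<open>auto simp: card_freqs\<close>)
  show "0 \<le> approx_num d n"
    by (rule approx_ge) (use assms in \<open>auto intro: opnorm_nonneg\<close>)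
qed

lemma sqrt_lower_aux:
  fixes L X J :: real
  assumes "0 < L" "0 \<le> X" "0 < J" "J * X \<le> 4 * L"
  shows "1/2 * sqrt (X / L) \<le> 1 / sqrt J"
proof -
  have "1/2 * sqrt (X / L) = sqrt (X / (4 * L))"
    by (simp add: real_sqrt_divide real_sqrt_mult)
  also have "\<dots> \<le> sqrt (1 / J)"
    using assms by (intro real_sqrt_le_mono) (simp add: field_simps)
  also have "\<dots> = 1 / sqrt J" by (simp add: real_sqrt_divide)
  finally show ?thesis .
qed

lemma sqrt_upper_aux:
  fixes L X J :: real
  assumes "0 < L" "0 \<le> X" "0 < J" "L \<le> 36 * J * X"
  shows "1 / sqrt J \<le> 6 * sqrt (X / L)"
proof -
  have "1 / sqrt J = sqrt (1 / J)" by (simp add: real_sqrt_divide)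
  also have "\<dots> \<le> sqrt (36 * X / L)"
    using assms by (intro real_sqrt_le_mono) (simp add: field_simps)
  also have "\<dots> = 6 * sqrt (X / L)"
  proof -
    have e: "36 * X / L = 36 * (X / L)" by simp
    have s6: "sqrt (36::real) = 6"
      using real_sqrt_abs[of "6::real"] by (simp add: power2_eq_square)
    have "sqrt (36 * X / L) = sqrt 36 * sqrt (X / L)" unfolding e by (rule real_sqrt_mult)
    also have "\<dots> = 6 * sqrt (X / L)" by (simp only: s6)
    finally show ?thesis .
  qed
  finally show ?thesis .
qed

theorem theorem2p3:
  shows "\<exists>c C::real. 0 < c \<and> c \<le> C \<and>
    (\<forall>d n::nat. 1 \<le> d \<longrightarrow> 1 \<le> n \<longrightarrow> n \<le> 3 ^ d \<longrightarrow>
       (n \<le> d \<longrightarrow> c \<le> approx_num d n \<and> approx_num d n \<le> C) \<and>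
       (d \<le> n \<and> 2 \<le> n \<longrightarrow>
          (let \<psi> = sqrt (log 2 (1 + real d / log 2 (real n)) / log 2 (real n))
           in c * \<psi> \<le> approx_num d n \<and> approx_num d n \<le> C * \<psi>))) \<and>
    (\<forall>d n::nat. 1 \<le> d \<longrightarrow> 3 ^ d < n \<longrightarrow> approx_num d n = 0)"
proof -
  have key: "(n \<le> d \<longrightarrow> 1/2 \<le> approx_num d n \<and> approx_num d n \<le> 6) \<and>
       (d \<le> n \<and> 2 \<le> n \<longrightarrow>
          (let \<psi> = sqrt (log 2 (1 + real d / log 2 (real n)) / log 2 (real n))
           in 1/2 * \<psi> \<le> approx_num d n \<and> approx_num d n \<le> 6 * \<psi>))"
    if d1: "1 \<le> d" and n1: "1 \<le> n" and n3: "n \<le> 3 ^ d" for d n :: nat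
  proof (intro conjI impI)
    define j where "j = jn d n"
    have a: "approx_num d n = 1 / sqrt (1 + real j)"
      unfolding j_def by (rule approx_exact[OF n1 n3])
    have jd: "j \<le> d" unfolding j_def by (rule jn_props(2)[OF n3])
    have nj: "n \<le> card (Lev d j)" unfolding j_def by (rule jn_props(1)[OF n3])
    {
      assume "n \<le> d"
      then have "n \<le> card (Lev d 1)" by (subst card_Lev1) simp
      then have j1: "j \<le> 1" unfolding j_def by (rule jn_le)
      have "sqrt (1 + real j) \<le> sqrt 4" using j1 by (intro real_sqrt_le_mono) simp
      also have "sqrt (4::real) = 2"
        using real_sqrt_abs[of "2::real"] by (simp add: power2_eq_square)
      finally have s2: "sqrt (1 + real j) \<le> 2" .
      have s1: "1 \<le> sqrt (1 + real j)" by simp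
      show "1/2 \<le> approx_num d n" unfolding a using s2 s1
        by (simp add: field_simps)
      have "1 / sqrt (1 + real j) \<le> 1" using s1 by (simp add: field_simps)
      then show "approx_num d n \<le> 6" unfolding a by linarith
    }
    {
      assume dn: "d \<le> n \<and> 2 \<le> n"
      define L where "L = log 2 (real n)"
      define X where "X = log 2 (1 + real d / L)"
      have L1: "1 \<le> L" using dn by (simp add: L_def)
      have X0: "0 \<le> X" unfolding X_def by (rule log_1p_nonneg[OF L1])
      have j1: "1 \<le> j"
      proof (rule ccontr)
        assume "\<not> 1 \<le> j"
        then have "j = 0" by simp
        then show False using nj dn by (simp add: card_Lev0)
      qed
      have "real n \<le> real (card (Lev d j))" using nj by simp
      also have "\<dots> \<le> (6 * real d / real j) ^ j" by (rule card_Lev_upper[OF j1 jd])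
      finally have "L \<le> 36 * real j * X"
        unfolding L_def X_def using upper_a[OF j1 jd _ _ n3] dn by simp
      also have "\<dots> \<le> 36 * (1 + real j) * X" using X0 by (intro mult_right_mono) auto
      finally have hU: "L \<le> 36 * (1 + real j) * X" .
      have hL: "(1 + real j) * X \<le> 4 * L"
      proof (cases "j \<le> 1")
        case True
        then show ?thesis unfolding L_def X_def using lower_a1[OF True d1] dn by simp
      next
        case False
        define m where "m = j - 1"
        have m1: "1 \<le> m" and md: "m < d" using False jd by (auto simp: m_def)
        have "card (Lev d m) < n" unfolding m_def j_def
          using jn_props(3)[OF n3] j1 by (simp add: j_def)
        then have "(2 * real d / real m) ^ m < real n"
          using card_Lev_lower[OF m1 less_imp_le[OF md]] by linarith
        from lower_a2[OF m1 md _ this] dn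
        have "(real m + 2) * X \<le> 4 * L" unfolding L_def X_def by simp
        moreover have "real m + 2 = 1 + real j" using j1 by (simp add: m_def of_nat_diff)
        ultimately show ?thesis by simp
      qed
      have L0: "0 < L" using L1 by simp
      show "let \<psi> = sqrt (log 2 (1 + real d / log 2 (real n)) / log 2 (real n))
           in 1/2 * \<psi> \<le> approx_num d n \<and> approx_num d n \<le> 6 * \<psi>"
        unfolding Let_def L_def[symmetric] X_def[symmetric] a
        using sqrt_lower_aux[OF L0 X0 _ hL] sqrt_upper_aux[OF L0 X0 _ hU] by simp
    }
  qed
  show ?thesis
    by (rule exI[of _ "1/2"], rule exI[of _ 6]) (use key approx_zero in auto)
qed

end
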